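(* Let $\beta\in\{1,2\}$ and let $r\geq\beta$ be an integer. Let $x\in[0,1]^N$ satisfy $\|(D^\beta)^Tx\|_0\leq s$, and let $q=Q^{\Sigma\Delta,r}_{\mathcal{A}_\delta}(x)$ be its $r$-th order $\Sigma\Delta$ quantization, whose state vector $u$ satisfies $x-q=D^ru$ and $\|u\|_\infty\leq\delta/2$. Let $\hat x$ be a solution to $$\min_{z\in\mathbb{R}^N}\|(D^\beta)^Tz\|_1\quad\text{subject to}\quad \|D^{-r}(z-q)\|_\infty\leq\delta/2.$$ Then $\|\hat x-x\|_2\leq C\sqrt{s}\,\delta$, where $C$ is a constant independent of $x$.
   Context: $D$ is the $N\times N$ matrix with $1$ on the diagonal, $-1$ on the subdiagonal, $0$ elsewhere; $D^r$ is its $r$-th power. $\|v\|_0$ is the number of nonzero entries. The alphabet is $\mathcal{A}_\delta=\{c+J\delta: J\in\mathbb{Z},\ J_1\leq J\leq J_2\}$ with step size $\delta>0$, and $Q_{\mathcal{A}}(z)$ is an element of $\mathcal{A}$ nearest to $z$. The $r$-th order $\Sigma\Delta$ quantization of $y\in\mathbb{R}^N$: with $u_i=0$ for $i\leq 0$, for $i=1,\dots,N$ set $q_i=Q_{\mathcal{A}}\big(\sum_{j=1}^r(-1)^{j-1}\binom{r}{j}u_{i-j}+y_i\big)$ and define $u_i$ by $(D^ru)_i=y_i-q_i$. The alphabet is assumed to have enough levels that the scheme is stable with $\|u\|_\infty\leq\delta/2$. *)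

theory Defs
  imports Complex_Main "Jordan_Normal_Form.Matrix"
begin

text \<open>Vectors in R^N are JNF vectors of dimension N, indexed 0..N-1
  (paper index i corresponds to i-1 here).\<close>

definition Dmat :: "nat \<Rightarrow> real mat" where
  "Dmat N = mat N N (\<lambda>(i,j). if i = j then 1 else if i = j + 1 then -1 else 0)"

definition Dinv_pow :: "nat \<Rightarrow> nat \<Rightarrow> real vec \<Rightarrow> real vec" where
  "Dinv_pow N r v = (THE w. w \<in> carrier_vec N \<and> (Dmat N ^\<^sub>m r) *\<^sub>v w = v)"

definition l0norm :: "real vec \<Rightarrow> nat" where
  "l0norm v = card {i. i < dim_vec v \<and> v $ i \<noteq> 0}"

definition l1norm :: "real vec \<Rightarrow> real" where
  "l1norm v = (\<Sum>i<dim_vec v. \<bar>v $ i\<bar>)"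

definition l2norm :: "real vec \<Rightarrow> real" where
  "l2norm v = sqrt (\<Sum>i<dim_vec v. (v $ i)\<^sup>2)"

definition linfnorm :: "real vec \<Rightarrow> real" where
  "linfnorm v = (if dim_vec v = 0 then 0 else Max {\<bar>v $ i\<bar> | i. i < dim_vec v})"

definition alphabet :: "real \<Rightarrow> real \<Rightarrow> int \<Rightarrow> int \<Rightarrow> real set" where
  "alphabet c \<delta> J1 J2 = {c + of_int J * \<delta> | J. J1 \<le> J \<and> J \<le> J2}"

text \<open>a is an element of A nearest to z (a valid value of Q_A(z)).\<close>
definition nearest :: "real set \<Rightarrow> real \<Rightarrow> real \<Rightarrow> bool" where
  "nearest A z a \<longleftrightarrow> a \<in> A \<and> (\<forall>b\<in>A. \<bar>z - a\<bar> \<le> \<bar>z - b\<bar>)"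

definition sigma_delta :: "real set \<Rightarrow> nat \<Rightarrow> real vec \<Rightarrow> real vec \<Rightarrow> real vec \<Rightarrow> bool" where
  "sigma_delta A r y q u \<longleftrightarrow>
     (let N = dim_vec y in
      q \<in> carrier_vec N \<and> u \<in> carrier_vec N \<and>
      (\<forall>i<N. nearest A
          ((\<Sum>j\<in>{1..r}. (-1)^(j-1) * real (r choose j) * (if j \<le> i then u $ (i - j) else 0)) + y $ i)
          (q $ i)) \<and>
      (Dmat N ^\<^sub>m r) *\<^sub>v u = y - q)"

end

theory Submission imports Defs begin

lemma Dmat_carrier[simp]: "Dmat N \<in> carrier_mat N N"
  by (simp add: Dmat_def)

lemma Dmat_dim[simp]: "dim_row (Dmat N) = N" "dim_col (Dmat N) = N"
  by (simp_all add: Dmat_def)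

lemma D_mult:
  assumes "w \<in> carrier_vec N" "i < N"
  shows "(Dmat N *\<^sub>v w) $ i = w $ i - (if i = 0 then 0 else w $ (i - 1))"
proof -
  have "(Dmat N *\<^sub>v w) $ i = (\<Sum>j\<in>{0..<N}. ((if j = i then 1 else 0) + (if j + 1 = i then -1 else 0)) * w $ j)"
    using assms by (auto simp: Dmat_def scalar_prod_def intro!: sum.cong)
  also have "\<dots> = (\<Sum>j\<in>{0..<N}. (if j = i then w $ j else 0)) - (\<Sum>j\<in>{0..<N}. (if j + 1 = i then w $ j else 0))"
    by (simp only: sum_subtractf[symmetric], intro sum.cong) auto
  also have "(\<Sum>j\<in>{0..<N}. (if j + 1 = i then w $ j else 0)) = (if i = 0 then 0 else w $ (i - 1))"
  proof (cases i)
    case 0 then show ?thesis by simp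
  next
    case (Suc k)
    have "(\<Sum>j\<in>{0..<N}. (if j + 1 = i then w $ j else 0)) = (\<Sum>j\<in>{0..<N}. (if j = k then w $ j else 0))"
      using Suc by (intro sum.cong) auto
    also have "\<dots> = w $ k" using Suc assms by simp
    finally show ?thesis using Suc by simp
  qed
  finally show ?thesis using assms by simp
qed

lemma DT_mult:
  assumes "w \<in> carrier_vec N" "i < N"
  shows "(transpose_mat (Dmat N) *\<^sub>v w) $ i = w $ i - (if i + 1 < N then w $ (i + 1) else 0)"
proof -
  have "(transpose_mat (Dmat N) *\<^sub>v w) $ i = (\<Sum>j\<in>{0..<N}. ((if j = i then 1 else 0) + (if j = i + 1 then -1 else 0)) * w $ j)"
    using assms by (auto simp: Dmat_def scalar_prod_def intro!: sum.cong)
  also have "\<dots> = (\<Sum>j\<in>{0..<N}. (if j = i then w $ j else 0)) - (\<Sum>j\<in>{0..<N}. (if j = i + 1 then w $ j else 0))"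
    by (simp only: sum_subtractf[symmetric], intro sum.cong) auto
  finally show ?thesis using assms by simp
qed

lemma pow_vec:
  assumes "A \<in> carrier_mat N N" "w \<in> carrier_vec N"
  shows "(A ^\<^sub>m Suc k) *\<^sub>v w = (A ^\<^sub>m k) *\<^sub>v (A *\<^sub>v w)"
  using assms by (simp add: assoc_mult_mat_vec[of _ N N _ N])

lemma pow_vec0:
  assumes "A \<in> carrier_mat N N" "w \<in> carrier_vec N"
  shows "(A ^\<^sub>m 0) *\<^sub>v w = w"
  using assms by auto

lemma pow_vec_add:
  assumes "A \<in> carrier_mat N N" "w \<in> carrier_vec N"
  shows "(A ^\<^sub>m (a + b)) *\<^sub>v w = (A ^\<^sub>m a) *\<^sub>v ((A ^\<^sub>m b) *\<^sub>v w)"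
  using assms(2)
proof (induction b arbitrary: w)
  case 0 then show ?case using assms by simp
next
  case (Suc b)
  have "(A ^\<^sub>m (a + Suc b)) *\<^sub>v w = (A ^\<^sub>m (a + b)) *\<^sub>v (A *\<^sub>v w)"
    using pow_vec[OF assms(1) Suc.prems] by simp
  also have "\<dots> = (A ^\<^sub>m a) *\<^sub>v ((A ^\<^sub>m b) *\<^sub>v (A *\<^sub>v w))"
    using Suc.IH[of "A *\<^sub>v w"] assms Suc.prems by simp
  also have "(A ^\<^sub>m b) *\<^sub>v (A *\<^sub>v w) = (A ^\<^sub>m Suc b) *\<^sub>v w"
    using pow_vec[OF assms(1) Suc.prems] by simp
  finally show ?case .
qed

lemma pow_transpose_vec:
  fixes A :: "real mat"
  assumes "A \<in> carrier_mat N N" "w \<in> carrier_vec N"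
  shows "transpose_mat (A ^\<^sub>m Suc k) *\<^sub>v w = transpose_mat A *\<^sub>v (transpose_mat (A ^\<^sub>m k) *\<^sub>v w)"
proof -
  have "transpose_mat (A ^\<^sub>m Suc k) = transpose_mat A * transpose_mat (A ^\<^sub>m k)"
    using transpose_mult[OF pow_carrier_mat[OF assms(1)] assms(1)] by simp
  then show ?thesis using assms by (simp add: assoc_mult_mat_vec[of _ N N _ N])
qed

lemma D_inj:
  assumes "a \<in> carrier_vec N" "b \<in> carrier_vec N" "Dmat N *\<^sub>v a = Dmat N *\<^sub>v b"
  shows "a = b"
proof -
  have "\<forall>i. i < N \<longrightarrow> a $ i = b $ i"
  proof (intro allI)
    fix i show "i < N \<longrightarrow> a $ i = b $ i"
    proof (induction i)
      case 0 then show ?case using D_mult[OF assms(1), of 0] D_mult[OF assms(2), of 0] assms(3) by simp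
    next
      case (Suc i)
      then show ?case using D_mult[OF assms(1), of "Suc i"] D_mult[OF assms(2), of "Suc i"] assms(3) by simp
    qed
  qed
  then show ?thesis using assms by (intro eq_vecI) auto
qed

lemma Dpow_inj:
  assumes "a \<in> carrier_vec N" "b \<in> carrier_vec N" "(Dmat N ^\<^sub>m k) *\<^sub>v a = (Dmat N ^\<^sub>m k) *\<^sub>v b"
  shows "a = b"
  using assms
proof (induction k arbitrary: a b)
  case 0 then show ?case by simp
next
  case (Suc k)
  have "Dmat N *\<^sub>v a = Dmat N *\<^sub>v b"
    using Suc.IH[of "Dmat N *\<^sub>v a" "Dmat N *\<^sub>v b"] Suc.prems pow_vec[of "Dmat N" N] mult_mat_vec_carrier[OF Dmat_carrier] by simp
  then show ?case using D_inj Suc.prems by blast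
qed

lemma D_surj:
  assumes "v \<in> carrier_vec N"
  shows "\<exists>w \<in> carrier_vec N. Dmat N *\<^sub>v w = v"
proof -
  define w where "w = vec N (\<lambda>i. \<Sum>j\<le>i. v $ j)"
  have "w \<in> carrier_vec N" by (simp add: w_def)
  moreover have "Dmat N *\<^sub>v w = v"
  proof (intro eq_vecI)
    fix i assume i: "i < dim_vec v"
    then have iN: "i < N" using assms by simp
    show "(Dmat N *\<^sub>v w) $ i = v $ i"
    proof (cases i)
      case 0 then show ?thesis using D_mult[OF \<open>w \<in> carrier_vec N\<close> iN] iN by (simp add: w_def)
    next
      case (Suc k) then show ?thesis using D_mult[OF \<open>w \<in> carrier_vec N\<close> iN] iN by (simp add: w_def)
    qed
  qed (use assms in simp)
  ultimately show ?thesis by blast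
qed

lemma Dpow_surj:
  assumes "v \<in> carrier_vec N"
  shows "\<exists>w \<in> carrier_vec N. (Dmat N ^\<^sub>m k) *\<^sub>v w = v"
  using assms
proof (induction k arbitrary: v)
  case 0 then show ?case by (intro bexI[of _ v]) auto
next
  case (Suc k)
  then obtain w' where w': "w' \<in> carrier_vec N" "(Dmat N ^\<^sub>m k) *\<^sub>v w' = v" by blast
  obtain w where w: "w \<in> carrier_vec N" "Dmat N *\<^sub>v w = w'" using D_surj[OF w'(1)] by blast
  show ?case using w w' pow_vec[of "Dmat N" N w k] by auto
qed

lemma Dinv_pow_prop:
  assumes "v \<in> carrier_vec N"
  shows "Dinv_pow N r v \<in> carrier_vec N \<and> (Dmat N ^\<^sub>m r) *\<^sub>v Dinv_pow N r v = v"
  unfolding Dinv_pow_def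
  by (rule theI') (use Dpow_surj[OF assms] Dpow_inj in blast)

lemma Dinv_pow_eq:
  assumes "w \<in> carrier_vec N" "(Dmat N ^\<^sub>m r) *\<^sub>v w = v"
  shows "Dinv_pow N r v = w"
  unfolding Dinv_pow_def
  by (rule the_equality) (use assms Dpow_inj in blast)+

lemma D_inf:
  assumes "w \<in> carrier_vec N" "\<forall>i<N. \<bar>w $ i\<bar> \<le> K"
  shows "\<forall>i<N. \<bar>(Dmat N *\<^sub>v w) $ i\<bar> \<le> 2 * K"
proof (intro allI impI)
  fix i assume i: "i < N"
  have K0: "0 \<le> K" using assms(2) i by (meson abs_ge_zero order_trans)
  show "\<bar>(Dmat N *\<^sub>v w) $ i\<bar> \<le> 2 * K"
  proof (cases "i = 0")
    case True
    have "\<bar>w $ 0\<bar> \<le> K" using assms(2) i True by simp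
    then show ?thesis using D_mult[OF assms(1) i] True K0 by simp
  next
    case False
    have "\<bar>w $ i\<bar> \<le> K" "\<bar>w $ (i - 1)\<bar> \<le> K" using assms(2) i by auto
    then show ?thesis using D_mult[OF assms(1) i] False by simp
  qed
qed

lemma Dpow_inf:
  assumes "w \<in> carrier_vec N" "\<forall>i<N. \<bar>w $ i\<bar> \<le> K"
  shows "\<forall>i<N. \<bar>((Dmat N ^\<^sub>m k) *\<^sub>v w) $ i\<bar> \<le> 2 ^ k * K"
  using assms
proof (induction k arbitrary: w K)
  case 0 then show ?case by simp
next
  case (Suc k)
  have c: "Dmat N *\<^sub>v w \<in> carrier_vec N" using mult_mat_vec_carrier[OF Dmat_carrier Suc.prems(1)] .
  have "\<forall>i<N. \<bar>((Dmat N ^\<^sub>m k) *\<^sub>v (Dmat N *\<^sub>v w)) $ i\<bar> \<le> 2 ^ k * (2 * K)"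
    using Suc.IH[OF c D_inf[OF Suc.prems]] .
  note H = this
  have e: "(2::real) ^ Suc k * K = 2 ^ k * (2 * K)" by simp
  show ?case unfolding pow_vec[OF Dmat_carrier Suc.prems(1), of k] e by (rule H)
qed

lemma shift_sum:
  fixes f :: "nat \<Rightarrow> real"
  assumes "\<And>i. 0 \<le> f i"
  shows "(\<Sum>i<N. if i + 1 < N then f (i + 1) else 0) \<le> (\<Sum>i<N. f i)"
proof (cases N)
  case 0 then show ?thesis by simp
next
  case (Suc M)
  have "(\<Sum>i<N. if i + 1 < N then f (i + 1) else 0) = (\<Sum>i<M. f (Suc i))"
    using Suc by (simp add: sum.lessThan_Suc)
  also have "\<dots> \<le> f 0 + (\<Sum>i<M. f (Suc i))" using assms by simp
  also have "\<dots> = (\<Sum>i<N. f i)" by (simp only: Suc sum.lessThan_Suc_shift)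
  finally show ?thesis .
qed

lemma DT_sq:
  assumes "h \<in> carrier_vec N"
  shows "(\<Sum>i<N. ((transpose_mat (Dmat N) *\<^sub>v h) $ i)\<^sup>2) \<le> 4 * (\<Sum>i<N. (h $ i)\<^sup>2)"
proof -
  have "(\<Sum>i<N. ((transpose_mat (Dmat N) *\<^sub>v h) $ i)\<^sup>2)
      \<le> (\<Sum>i<N. 2 * (h $ i)\<^sup>2 + 2 * (if i + 1 < N then (h $ (i + 1))\<^sup>2 else 0))"
  proof (intro sum_mono)
    fix i assume "i \<in> {..<N}"
    then have i: "i < N" by simp
    have "\<And>a b::real. (a - b)\<^sup>2 \<le> 2 * a\<^sup>2 + 2 * b\<^sup>2"
      by (smt (verit) power2_diff zero_le_power2 power2_sum)
    then show "((transpose_mat (Dmat N) *\<^sub>v h) $ i)\<^sup>2 \<le> 2 * (h $ i)\<^sup>2 + 2 * (if i + 1 < N then (h $ (i + 1))\<^sup>2 else 0)"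
      using DT_mult[OF assms i] by (cases "i + 1 < N") auto
  qed
  also have "\<dots> = 2 * (\<Sum>i<N. (h $ i)\<^sup>2) + 2 * (\<Sum>i<N. if i + 1 < N then (h $ (i + 1))\<^sup>2 else 0)"
    by (simp add: sum.distrib sum_distrib_left)
  also have "\<dots> \<le> 2 * (\<Sum>i<N. (h $ i)\<^sup>2) + 2 * (\<Sum>i<N. (h $ i)\<^sup>2)"
    using shift_sum[of "\<lambda>i. (h $ i)\<^sup>2" N] by simp
  finally show ?thesis by simp
qed

lemma DTpow_sq:
  assumes "h \<in> carrier_vec N"
  shows "(\<Sum>i<N. ((transpose_mat (Dmat N ^\<^sub>m k) *\<^sub>v h) $ i)\<^sup>2) \<le> 4 ^ k * (\<Sum>i<N. (h $ i)\<^sup>2)"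
proof (induction k)
  case 0 then show ?case using assms by simp
next
  case (Suc k)
  have c: "transpose_mat (Dmat N ^\<^sub>m k) *\<^sub>v h \<in> carrier_vec N"
    using mult_mat_vec_carrier[OF transpose_carrier_mat[THEN iffD2, OF pow_carrier_mat[OF Dmat_carrier]] assms] .
  have "(\<Sum>i<N. ((transpose_mat (Dmat N ^\<^sub>m Suc k) *\<^sub>v h) $ i)\<^sup>2)
     = (\<Sum>i<N. ((transpose_mat (Dmat N) *\<^sub>v (transpose_mat (Dmat N ^\<^sub>m k) *\<^sub>v h)) $ i)\<^sup>2)"
    using pow_transpose_vec[OF Dmat_carrier assms, of k] by simp
  also have "\<dots> \<le> 4 * (\<Sum>i<N. ((transpose_mat (Dmat N ^\<^sub>m k) *\<^sub>v h) $ i)\<^sup>2)"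
    using DT_sq[OF c] .
  also have "\<dots> \<le> 4 * (4 ^ k * (\<Sum>i<N. (h $ i)\<^sup>2))" using Suc.IH by simp
  finally show ?case by simp
qed

lemma cs_sum:
  fixes a :: "nat \<Rightarrow> real"
  shows "(\<Sum>i\<in>S. a i)\<^sup>2 \<le> real (card S) * (\<Sum>i\<in>S. (a i)\<^sup>2)"
proof -
  define A where "A = (\<Sum>i\<in>S. a i)"
  define Q where "Q = (\<Sum>i\<in>S. (a i)\<^sup>2)"
  have "0 \<le> (\<Sum>i\<in>S. \<Sum>j\<in>S. (a i - a j)\<^sup>2)" by (intro sum_nonneg) auto
  also have "\<dots> = (\<Sum>i\<in>S. real (card S) * (a i)\<^sup>2 + Q - 2 * a i * A)"
  proof (rule sum.cong[OF refl])
    fix i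
    have "(\<Sum>j\<in>S. (a i - a j)\<^sup>2) = (\<Sum>j\<in>S. ((a i)\<^sup>2 + (a j)\<^sup>2) - 2 * a i * a j)"
      by (rule sum.cong[OF refl]) (simp add: power2_diff)
    also have "\<dots> = (\<Sum>j\<in>S. (a i)\<^sup>2) + Q - 2 * a i * A"
      unfolding sum_subtractf sum.distrib Q_def A_def sum_distrib_left ..
    finally show "(\<Sum>j\<in>S. (a i - a j)\<^sup>2) = real (card S) * (a i)\<^sup>2 + Q - 2 * a i * A" by simp
  qed
  also have "\<dots> = real (card S) * Q + real (card S) * Q - 2 * A * A"
    unfolding sum_subtractf sum.distrib Q_def A_def sum_distrib_left[symmetric] sum_distrib_right[symmetric]
    by simp
  finally show ?thesis unfolding A_def Q_def by (simp add: power2_eq_square)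
qed
lemma cone:
  assumes "y \<in> carrier_vec N" "v \<in> carrier_vec N" "l1norm (y + v) \<le> l1norm y" "l0norm y \<le> s"
  shows "l1norm v \<le> 2 * sqrt (real s) * sqrt (\<Sum>i<N. (v $ i)\<^sup>2)"
proof -
  define S where "S = {i. i < N \<and> y $ i \<noteq> 0}"
  define T where "T = {..<N} - S"
  have SN: "S \<subseteq> {..<N}" and fS: "finite S" and fT: "finite T" by (auto simp: S_def T_def)
  have cS: "card S \<le> s" using assms(4) assms(1) by (simp add: l0norm_def S_def)
  have U: "{..<N} = S \<union> T" "S \<inter> T = {}" using SN by (auto simp: T_def)
  have split: "\<And>f. (\<Sum>i<N. f i) = (\<Sum>i\<in>S. f i) + (\<Sum>i\<in>T. f i)"
    using U fS fT by (metis sum.union_disjoint)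
  have yT: "\<And>i. i \<in> T \<Longrightarrow> y $ i = 0" by (auto simp: T_def S_def)
  have "l1norm (y + v) = (\<Sum>i<N. \<bar>y $ i + v $ i\<bar>)"
    unfolding l1norm_def using assms(1,2) by simp
  also have "\<dots> = (\<Sum>i\<in>S. \<bar>y $ i + v $ i\<bar>) + (\<Sum>i\<in>T. \<bar>y $ i + v $ i\<bar>)" by (rule split)
  also have "(\<Sum>i\<in>T. \<bar>y $ i + v $ i\<bar>) = (\<Sum>i\<in>T. \<bar>v $ i\<bar>)" by (rule sum.cong) (auto simp: yT)
  finally have "l1norm (y + v) = (\<Sum>i\<in>S. \<bar>y $ i + v $ i\<bar>) + (\<Sum>i\<in>T. \<bar>v $ i\<bar>)" .
  moreover have "(\<Sum>i\<in>S. \<bar>y $ i\<bar> - \<bar>v $ i\<bar>) \<le> (\<Sum>i\<in>S. \<bar>y $ i + v $ i\<bar>)"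
  proof (rule sum_mono)
    fix i show "\<bar>y $ i\<bar> - \<bar>v $ i\<bar> \<le> \<bar>y $ i + v $ i\<bar>"
      using abs_triangle_ineq4[of "y $ i + v $ i" "v $ i"] by simp
  qed
  then have "(\<Sum>i\<in>S. \<bar>y $ i + v $ i\<bar>) \<ge> (\<Sum>i\<in>S. \<bar>y $ i\<bar>) - (\<Sum>i\<in>S. \<bar>v $ i\<bar>)"
    by (simp add: sum_subtractf)
  moreover have "l1norm y = (\<Sum>i\<in>S. \<bar>y $ i\<bar>)"
  proof -
    have "l1norm y = (\<Sum>i\<in>S. \<bar>y $ i\<bar>) + (\<Sum>i\<in>T. \<bar>y $ i\<bar>)"
      unfolding l1norm_def using assms(1) split[of "\<lambda>i. \<bar>y $ i\<bar>"] by simp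
    moreover have "(\<Sum>i\<in>T. \<bar>y $ i\<bar>) = 0" by (rule sum.neutral) (auto simp: yT)
    ultimately show ?thesis by simp
  qed
  ultimately have TS: "(\<Sum>i\<in>T. \<bar>v $ i\<bar>) \<le> (\<Sum>i\<in>S. \<bar>v $ i\<bar>)" using assms(3) by linarith
  have l1v: "l1norm v \<le> 2 * (\<Sum>i\<in>S. \<bar>v $ i\<bar>)"
    unfolding l1norm_def using assms(2) split[of "\<lambda>i. \<bar>v $ i\<bar>"] TS by simp
  have "(\<Sum>i\<in>S. \<bar>v $ i\<bar>)\<^sup>2 \<le> (\<Sum>i\<in>S. (\<bar>v $ i\<bar>)\<^sup>2) * card S"
    using cs_sum[of "\<lambda>i. \<bar>v $ i\<bar>" S] by (simp add: mult.commute)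
  also have "\<dots> \<le> (\<Sum>i<N. (v $ i)\<^sup>2) * s"
  proof (rule mult_mono)
    show "(\<Sum>i\<in>S. \<bar>v $ i\<bar>\<^sup>2) \<le> (\<Sum>i<N. (v $ i)\<^sup>2)"
      using sum_mono2[OF _ SN, of "\<lambda>i. (v $ i)\<^sup>2"] by simp
  qed (use cS in \<open>auto intro: sum_nonneg\<close>)
  finally have "(\<Sum>i\<in>S. \<bar>v $ i\<bar>) \<le> sqrt ((\<Sum>i<N. (v $ i)\<^sup>2) * s)"
    by (simp add: real_le_rsqrt)
  then have "(\<Sum>i\<in>S. \<bar>v $ i\<bar>) \<le> sqrt (real s) * sqrt (\<Sum>i<N. (v $ i)\<^sup>2)"
    by (simp add: real_sqrt_mult mult.commute)
  then show ?thesis using l1v by linarith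
qed

lemma linf_bound:
  assumes "w \<in> carrier_vec N" "linfnorm w \<le> K" "i < N"
  shows "\<bar>w $ i\<bar> \<le> K"
proof -
  have "\<bar>w $ i\<bar> \<le> Max {\<bar>w $ i\<bar> | i. i < dim_vec w}"
    using assms by (intro Max_ge) auto
  also have "\<dots> = linfnorm w" using assms by (simp add: linfnorm_def)
  finally show ?thesis using assms by simp
qed

theorem theorem1:
  fixes \<beta> r :: nat
  assumes "\<beta> \<in> {1, 2}" and "r \<ge> \<beta>"
  shows "\<exists>C::real. \<forall>(N::nat) (s::nat) (\<delta>::real) (c::real) (J1::int) (J2::int)
            (x::real vec) (q::real vec) (u::real vec) (xhat::real vec).
     \<delta> > 0 \<longrightarrow> J1 \<le> J2 \<longrightarrow>
     x \<in> carrier_vec N \<longrightarrow> (\<forall>i<N. 0 \<le> x $ i \<and> x $ i \<le> 1) \<longrightarrow>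
     l0norm (transpose_mat (Dmat N ^\<^sub>m \<beta>) *\<^sub>v x) \<le> s \<longrightarrow>
     sigma_delta (alphabet c \<delta> J1 J2) r x q u \<longrightarrow>
     linfnorm u \<le> \<delta> / 2 \<longrightarrow>
     xhat \<in> carrier_vec N \<longrightarrow>
     linfnorm (Dinv_pow N r (xhat - q)) \<le> \<delta> / 2 \<longrightarrow>
     (\<forall>z \<in> carrier_vec N. linfnorm (Dinv_pow N r (z - q)) \<le> \<delta> / 2 \<longrightarrow>
         l1norm (transpose_mat (Dmat N ^\<^sub>m \<beta>) *\<^sub>v xhat)
           \<le> l1norm (transpose_mat (Dmat N ^\<^sub>m \<beta>) *\<^sub>v z)) \<longrightarrow>
     l2norm (xhat - x) \<le> C * sqrt (real s) * \<delta>"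
proof (intro exI[of _ "2 ^ (r + 1)"] allI impI)
  fix N s :: nat and \<delta> c :: real and J1 J2 :: int and x q u xhat :: "real vec"
  assume \<delta>: "\<delta> > 0" and "J1 \<le> J2" and xc: "x \<in> carrier_vec N"
    and "\<forall>i<N. 0 \<le> x $ i \<and> x $ i \<le> 1"
    and l0: "l0norm (transpose_mat (Dmat N ^\<^sub>m \<beta>) *\<^sub>v x) \<le> s"
    and sd: "sigma_delta (alphabet c \<delta> J1 J2) r x q u"
    and uinf: "linfnorm u \<le> \<delta> / 2"
    and xhc: "xhat \<in> carrier_vec N"
    and ainf: "linfnorm (Dinv_pow N r (xhat - q)) \<le> \<delta> / 2"
    and minimal: "\<forall>z \<in> carrier_vec N. linfnorm (Dinv_pow N r (z - q)) \<le> \<delta> / 2 \<longrightarrow>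
         l1norm (transpose_mat (Dmat N ^\<^sub>m \<beta>) *\<^sub>v xhat)
           \<le> l1norm (transpose_mat (Dmat N ^\<^sub>m \<beta>) *\<^sub>v z)"
  define B where "B = Dmat N ^\<^sub>m \<beta>"
  have Bc: "B \<in> carrier_mat N N" by (simp add: B_def)
  have BTc: "transpose_mat B \<in> carrier_mat N N" using Bc by simp
  have dimx: "dim_vec x = N" using xc by simp
  from sd have qc: "q \<in> carrier_vec N" and uc: "u \<in> carrier_vec N"
    and Mu: "(Dmat N ^\<^sub>m r) *\<^sub>v u = x - q"
    unfolding sigma_delta_def Let_def dimx by auto
  have Dx: "Dinv_pow N r (x - q) = u" by (rule Dinv_pow_eq[OF uc Mu])
  have l1: "l1norm (transpose_mat B *\<^sub>v xhat) \<le> l1norm (transpose_mat B *\<^sub>v x)"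
    using minimal xc Dx uinf unfolding B_def by auto
  define a where "a = Dinv_pow N r (xhat - q)"
  have xqc: "xhat - q \<in> carrier_vec N" using xhc qc by simp
  have ac: "a \<in> carrier_vec N" and Ma: "(Dmat N ^\<^sub>m r) *\<^sub>v a = xhat - q"
    using Dinv_pow_prop[OF xqc, of r] unfolding a_def by auto
  define w where "w = a - u"
  have wc: "w \<in> carrier_vec N" using ac uc by (simp add: w_def)
  define h where "h = xhat - x"
  have hc: "h \<in> carrier_vec N" using xhc xc by (simp add: h_def)
  have Mw: "(Dmat N ^\<^sub>m r) *\<^sub>v w = h"
  proof -
    have "(Dmat N ^\<^sub>m r) *\<^sub>v w = (Dmat N ^\<^sub>m r) *\<^sub>v a - (Dmat N ^\<^sub>m r) *\<^sub>v u"
      unfolding w_def by (rule mult_minus_distrib_mat_vec[OF pow_carrier_mat[OF Dmat_carrier] ac uc])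
    also have "\<dots> = h" unfolding Ma Mu h_def using xhc xc qc by (intro eq_vecI) auto
    finally show ?thesis .
  qed
  have winf: "\<forall>i<N. \<bar>w $ i\<bar> \<le> \<delta>"
  proof (intro allI impI)
    fix i assume i: "i < N"
    have "linfnorm a \<le> \<delta> / 2" using ainf unfolding a_def .
    then have "\<bar>a $ i\<bar> \<le> \<delta> / 2" using linf_bound[OF ac _ i] by blast
    moreover have "\<bar>u $ i\<bar> \<le> \<delta> / 2" using linf_bound[OF uc uinf i] .
    ultimately show "\<bar>w $ i\<bar> \<le> \<delta>" using i ac uc by (simp add: w_def)
  qed
  define g where "g = (Dmat N ^\<^sub>m (r - \<beta>)) *\<^sub>v w"
  have gc: "g \<in> carrier_vec N" unfolding g_def
    using mult_mat_vec_carrier[OF pow_carrier_mat[OF Dmat_carrier] wc] .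
  define K where "K = 2 ^ (r - \<beta>) * \<delta>"
  have ginf: "\<forall>i<N. \<bar>g $ i\<bar> \<le> K" unfolding g_def K_def by (rule Dpow_inf[OF wc winf])
  have K0: "K \<ge> 0" using \<delta> by (simp add: K_def)
  have hg: "h = B *\<^sub>v g"
    using pow_vec_add[OF Dmat_carrier wc, of \<beta> "r - \<beta>"] assms(2) Mw
    unfolding B_def g_def by simp
  define v where "v = transpose_mat B *\<^sub>v h"
  have vc: "v \<in> carrier_vec N" unfolding v_def using mult_mat_vec_carrier[OF BTc hc] .
  define y where "y = transpose_mat B *\<^sub>v x"
  have yc: "y \<in> carrier_vec N" unfolding y_def using mult_mat_vec_carrier[OF BTc xc] .
  have xh: "xhat = x + h" unfolding h_def using xhc xc by (intro eq_vecI) auto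
  have "transpose_mat B *\<^sub>v xhat = y + v"
    unfolding xh y_def v_def by (rule mult_add_distrib_mat_vec[OF BTc xc hc])
  then have "l1norm (y + v) \<le> l1norm y" using l1 unfolding y_def by simp
  then have cone1: "l1norm v \<le> 2 * sqrt (real s) * sqrt (\<Sum>i<N. (v $ i)\<^sup>2)"
    using cone[OF yc vc] l0 unfolding y_def B_def by simp
  define Q where "Q = (\<Sum>i<N. (h $ i)\<^sup>2)"
  have Q0: "Q \<ge> 0" unfolding Q_def by (intro sum_nonneg) auto
  have "(\<Sum>i<N. (v $ i)\<^sup>2) \<le> 4 ^ \<beta> * Q"
    unfolding v_def B_def Q_def by (rule DTpow_sq[OF hc])
  then have "sqrt (\<Sum>i<N. (v $ i)\<^sup>2) \<le> sqrt (4 ^ \<beta> * Q)" by simp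
  also have "sqrt (4 ^ \<beta> * Q) = 2 ^ \<beta> * sqrt Q"
    by (simp add: real_sqrt_mult real_sqrt_power)
  finally have sqv: "sqrt (\<Sum>i<N. (v $ i)\<^sup>2) \<le> 2 ^ \<beta> * sqrt Q" .
  have "Q = h \<bullet> h" unfolding Q_def scalar_prod_def using hc by (simp add: power2_eq_square atLeast0LessThan)
  also have "\<dots> = v \<bullet> g" unfolding v_def hg[symmetric, THEN sym] 
    using transpose_vec_mult_scalar[OF Bc gc hc] hg by simp
  also have "\<dots> = (\<Sum>i<N. v $ i * g $ i)" unfolding scalar_prod_def using gc by (simp add: atLeast0LessThan)
  also have "\<dots> \<le> (\<Sum>i<N. \<bar>v $ i\<bar> * K)"
  proof (rule sum_mono)
    fix i assume "i \<in> {..<N}"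
    then have "\<bar>g $ i\<bar> \<le> K" using ginf by simp
    then have "\<bar>v $ i * g $ i\<bar> \<le> \<bar>v $ i\<bar> * K" by (simp add: abs_mult mult_left_mono)
    then show "v $ i * g $ i \<le> \<bar>v $ i\<bar> * K" by linarith
  qed
  also have "\<dots> = l1norm v * K" unfolding l1norm_def using vc by (simp add: sum_distrib_right)
  also have "\<dots> = K * l1norm v" by (rule mult.commute)
  also have "\<dots> \<le> K * (2 * sqrt (real s) * (2 ^ \<beta> * sqrt Q))"
  proof (rule mult_left_mono[OF _ K0])
    show "l1norm v \<le> 2 * sqrt (real s) * (2 ^ \<beta> * sqrt Q)"
    proof -
      have "2 * sqrt (real s) * sqrt (\<Sum>i<N. (v $ i)\<^sup>2) \<le> 2 * sqrt (real s) * (2 ^ \<beta> * sqrt Q)"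
        by (rule mult_left_mono[OF sqv]) simp
      then show ?thesis using cone1 by linarith
    qed
  qed
  also have "\<dots> = (2 ^ (r + 1) * sqrt (real s) * \<delta>) * sqrt Q"
  proof -
    have "(2::real) ^ (r - \<beta>) * 2 ^ \<beta> = 2 ^ r" using assms(2) by (simp add: power_add[symmetric])
    then show ?thesis unfolding K_def by (simp add: algebra_simps)
  qed
  finally have main: "Q \<le> (2 ^ (r + 1) * sqrt (real s) * \<delta>) * sqrt Q" .
  have l2: "l2norm (xhat - x) = sqrt Q" unfolding l2norm_def Q_def h_def using xhc xc by simp
  show "l2norm (xhat - x) \<le> 2 ^ (r + 1) * sqrt (real s) * \<delta>"
  proof (cases "sqrt Q = 0")
    case True then show ?thesis using l2 \<delta> by simp
  next
    case False
    then have pos: "sqrt Q > 0" using Q0 by simp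
    have "sqrt Q * sqrt Q \<le> (2 ^ (r + 1) * sqrt (real s) * \<delta>) * sqrt Q"
      using main Q0 by simp
    then have "sqrt Q \<le> 2 ^ (r + 1) * sqrt (real s) * \<delta>" by (rule mult_right_le_imp_le[OF _ pos])
    then show ?thesis using l2 by simp
  qed
qed

end
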